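(* Let $\mathbf{B}_{\mathrm{lat}}$ be the (opposite) incidence coalgebra of the lattices of noncrossing partitions and $\mathbf{B}_{\mathrm{opd}}$ the block-substitution bialgebra of noncrossing partitions (both defined in the context). The linear map $\Phi:\mathbf{B}_{\mathrm{lat}}\to\mathbf{B}_{\mathrm{opd}}$ defined by $\Phi(\llbracket P,Q\rrbracket)=P/Q$ is a coalgebra homomorphism.
   Context: For $n\geq1$, $\operatorname{NCP}(n)$ denotes the set of noncrossing partitions of $[n]$ (no $a<c<b<d$ with $a,b$ in one block and $c,d$ in another), ordered by refinement: $P\leq Q$ if each block of $Q$ is a union of blocks of $P$. Partitions of finite linearly ordered sets are identified with partitions of $[m]$ via the order-preserving bijection, and $P_{|X}$ denotes the induced partition on $X$. $\mathbf{B}_{\mathrm{opd}}$ is the free commutative unital algebra generated by all nonempty noncrossing partitions; for $P\leq Q$ in $\operatorname{NCP}(n)$ with $Q=\{\tau_1,\dots,\tau_l\}$, $P/Q:=P_{|\tau_1}\cdots P_{|\tau_l}\in\mathbf{B}_{\mathrm{opd}}$. Its coproduct is $\delta(P)=\sum_{Q\in\operatorname{NCP}(n),\,Q\geq P}Q\otimes P/Q$, extended multiplicatively, and its counit is $\varepsilon(P)=1$ if $P$ has exactly one block and $0$ otherwise. $\mathbf{B}_{\mathrm{lat}}$ is the vector space with basis all intervals $\llbracket P,Q\rrbracket=\{M: P\leq M\leq Q\}$ with $P\leq Q$ in $\operatorname{NCP}(n)$, $n\geq1$, with coproduct $\llbracket P,Q\rrbracket\mapsto\sum_{M\in\llbracket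 P,Q\rrbracket}\llbracket M,Q\rrbracket\otimes\llbracket P,M\rrbracket$ (the opposite of the usual incidence coproduct) and counit $\llbracket P,Q\rrbracket\mapsto\delta_{P,Q}$. *)

theory Defs
  imports Main "HOL-Library.Poly_Mapping" "HOL-Library.Multiset"
    "HOL-Library.Product_Plus" "HOL-Library.Disjoint_Sets"
begin

type_synonym ptn = "nat set set"

definition noncrossing :: "ptn \<Rightarrow> bool" where
  "noncrossing P \<longleftrightarrow>
     \<not> (\<exists>B1\<in>P. \<exists>B2\<in>P. B1 \<noteq> B2 \<and>
          (\<exists>a b c d. a \<in> B1 \<and> b \<in> B1 \<and> c \<in> B2 \<and> d \<in> B2 \<and> a < c \<and> c < b \<and> b < d))"

definition NCP :: "nat \<Rightarrow> ptn set" where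
  "NCP n = {P. partition_on {1..n} P \<and> noncrossing P}"

definition refines :: "ptn \<Rightarrow> ptn \<Rightarrow> bool" where
  "refines P Q \<longleftrightarrow> (\<forall>\<tau>\<in>Q. \<exists>S\<subseteq>P. \<tau> = \<Union>S)"

text \<open>Order-preserving identification of a finite set X \<subseteq> nat with [|X|].\<close>
definition std_map :: "nat set \<Rightarrow> nat \<Rightarrow> nat" where
  "std_map X x = card {y \<in> X. y \<le> x}"

text \<open>Induced partition P|X, transported to a partition of [|X|].\<close>
definition restr :: "ptn \<Rightarrow> nat set \<Rightarrow> ptn" where
  "restr P X = (\<lambda>B. std_map X ` B) ` {B \<inter> X | B. B \<in> P \<and> B \<inter> X \<noteq> {}}"

text \<open>Elements of the free 'k-vector space on a basis 'a: finitely supported maps.\<close>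
definition lin_ext :: "('a \<Rightarrow> ('b \<Rightarrow>\<^sub>0 'k::comm_semiring_1)) \<Rightarrow> ('a \<Rightarrow>\<^sub>0 'k) \<Rightarrow> ('b \<Rightarrow>\<^sub>0 'k)" where
  "lin_ext f x = (\<Sum>a\<in>Poly_Mapping.keys x. Poly_Mapping.map (\<lambda>c. Poly_Mapping.lookup x a * c) (f a))"

definition lin_fun :: "('a \<Rightarrow> 'k::comm_semiring_1) \<Rightarrow> ('a \<Rightarrow>\<^sub>0 'k) \<Rightarrow> 'k" where
  "lin_fun f x = (\<Sum>a\<in>Poly_Mapping.keys x. Poly_Mapping.lookup x a * f a)"

text \<open>B_opd is the polynomial algebra on the generators (nonempty noncrossing partitions):
  a monomial is a multiset of generators, and B_opd = the finitely supported maps on monomials, with the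
  convolution product (the monoid algebra of the free commutative monoid).
  B_opd \<otimes> B_opd is finitely supported maps on pairs of monomials, again with the convolution product,
  which is the tensor product algebra.\<close>

definition gens :: "ptn set" where
  "gens = (\<Union>n\<in>{n. n \<ge> 1}. NCP n)"

text \<open>P/Q = P|tau_1 ... P|tau_l, a monomial.\<close>
definition quot :: "ptn \<Rightarrow> ptn \<Rightarrow> ptn multiset" where
  "quot P Q = image_mset (\<lambda>\<tau>. restr P \<tau>) (mset_set Q)"

definition opd_delta_gen :: "ptn \<Rightarrow> (ptn multiset \<times> ptn multiset \<Rightarrow>\<^sub>0 'k::comm_semiring_1)" where
  "opd_delta_gen P =
     (\<Sum>Q\<in>{Q \<in> NCP (card (\<Union>P)). refines P Q}. Poly_Mapping.single ({#Q#}, quot P Q) 1)"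

definition opd_delta_mono :: "ptn multiset \<Rightarrow> (ptn multiset \<times> ptn multiset \<Rightarrow>\<^sub>0 'k::comm_semiring_1)" where
  "opd_delta_mono M = prod_mset (image_mset opd_delta_gen M)"

definition opd_delta :: "(ptn multiset \<Rightarrow>\<^sub>0 'k::comm_semiring_1) \<Rightarrow> (ptn multiset \<times> ptn multiset \<Rightarrow>\<^sub>0 'k)" where
  "opd_delta = lin_ext opd_delta_mono"

definition opd_eps_gen :: "ptn \<Rightarrow> 'k::comm_semiring_1" where
  "opd_eps_gen P = (if card P = 1 then 1 else 0)"

definition opd_eps :: "(ptn multiset \<Rightarrow>\<^sub>0 'k::comm_semiring_1) \<Rightarrow> 'k" where
  "opd_eps = lin_fun (\<lambda>M. prod_mset (image_mset opd_eps_gen M))"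

text \<open>Basis: intervals [[P,Q]], represented by the pair (P,Q).\<close>
definition lat_basis :: "(ptn \<times> ptn) set" where
  "lat_basis = {(P, Q). \<exists>n\<ge>1. P \<in> NCP n \<and> Q \<in> NCP n \<and> refines P Q}"

definition interval :: "ptn \<Rightarrow> ptn \<Rightarrow> ptn set" where
  "interval P Q = {M \<in> NCP (card (\<Union>P)). refines P M \<and> refines M Q}"

definition lat_delta_basis :: "ptn \<times> ptn \<Rightarrow> ((ptn \<times> ptn) \<times> (ptn \<times> ptn) \<Rightarrow>\<^sub>0 'k::comm_semiring_1)" where
  "lat_delta_basis I = (case I of (P, Q) \<Rightarrow>
     (\<Sum>M\<in>interval P Q. Poly_Mapping.single ((M, Q), (P, M)) 1))"

definition lat_delta :: "((ptn \<times> ptn) \<Rightarrow>\<^sub>0 'k::comm_semiring_1) \<Rightarrow> ((ptn \<times> ptn) \<times> (ptn \<times> ptn) \<Rightarrow>\<^sub>0 'k)" where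
  "lat_delta = lin_ext lat_delta_basis"

definition lat_eps :: "((ptn \<times> ptn) \<Rightarrow>\<^sub>0 'k::comm_semiring_1) \<Rightarrow> 'k" where
  "lat_eps = lin_fun (\<lambda>(P, Q). if P = Q then 1 else 0)"

definition Phi :: "((ptn \<times> ptn) \<Rightarrow>\<^sub>0 'k::comm_semiring_1) \<Rightarrow> (ptn multiset \<Rightarrow>\<^sub>0 'k)" where
  "Phi = lin_ext (\<lambda>(P, Q). Poly_Mapping.single (quot P Q) 1)"

definition Phi_tensor :: "((ptn \<times> ptn) \<times> (ptn \<times> ptn) \<Rightarrow>\<^sub>0 'k::comm_semiring_1)
     \<Rightarrow> (ptn multiset \<times> ptn multiset \<Rightarrow>\<^sub>0 'k)" where
  "Phi_tensor = lin_ext (\<lambda>((P, Q), (P', Q')). Poly_Mapping.single (quot P Q, quot P' Q') 1)"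

end

theory Submission
  imports Defs "HOL-Library.FuncSet"
begin

lemma lookup_lin_ext:
  "Poly_Mapping.lookup (lin_ext f x) k = (\<Sum>a\<in>Poly_Mapping.keys x. Poly_Mapping.lookup x a * Poly_Mapping.lookup (f a) k)"
  unfolding lin_ext_def lookup_sum
  by (intro sum.cong refl) (auto simp: map.rep_eq when_def in_keys_iff)

lemma lookup_lin_ext_sup:
  assumes "finite S" "Poly_Mapping.keys x \<subseteq> S"
  shows "Poly_Mapping.lookup (lin_ext f x) k = (\<Sum>a\<in>S. Poly_Mapping.lookup x a * Poly_Mapping.lookup (f a) k)"
  unfolding lookup_lin_ext using assms
  by (intro sum.mono_neutral_left) (auto simp: in_keys_iff)

lemma lin_ext_comp:
  "lin_ext g (lin_ext f x) = lin_ext (\<lambda>a. lin_ext g (f a)) x"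
proof (rule poly_mapping_eqI)
  fix k
  define K where "K = (\<Union>a\<in>Poly_Mapping.keys x. Poly_Mapping.keys (f a))"
  have fK: "finite K" unfolding K_def by auto
  have sub: "Poly_Mapping.keys (lin_ext f x) \<subseteq> K"
  proof
    fix b assume "b \<in> Poly_Mapping.keys (lin_ext f x)"
    then have "(\<Sum>a\<in>Poly_Mapping.keys x. Poly_Mapping.lookup x a * Poly_Mapping.lookup (f a) b) \<noteq> 0"
      by (simp add: in_keys_iff lookup_lin_ext)
    then obtain a where "a \<in> Poly_Mapping.keys x" "Poly_Mapping.lookup (f a) b \<noteq> 0"
      by (metis (no_types, lifting) mult_zero_right sum.neutral)
    then show "b \<in> K" unfolding K_def by (auto simp: in_keys_iff)
  qed
  have "Poly_Mapping.lookup (lin_ext g (lin_ext f x)) k =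
     (\<Sum>b\<in>K. (\<Sum>a\<in>Poly_Mapping.keys x. Poly_Mapping.lookup x a * Poly_Mapping.lookup (f a) b) * Poly_Mapping.lookup (g b) k)"
    by (subst lookup_lin_ext_sup[OF fK sub]) (simp add: lookup_lin_ext)
  also have "\<dots> = (\<Sum>a\<in>Poly_Mapping.keys x. Poly_Mapping.lookup x a * (\<Sum>b\<in>K. Poly_Mapping.lookup (f a) b * Poly_Mapping.lookup (g b) k))"
    by (simp add: sum_distrib_left sum_distrib_right mult.assoc sum.swap[of _ K])
  also have "\<dots> = (\<Sum>a\<in>Poly_Mapping.keys x. Poly_Mapping.lookup x a * Poly_Mapping.lookup (lin_ext g (f a)) k)"
  proof (intro sum.cong refl arg_cong2[where f="(*)"])
    fix a assume "a \<in> Poly_Mapping.keys x"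
    then have "Poly_Mapping.keys (f a) \<subseteq> K" unfolding K_def by auto
    then show "(\<Sum>b\<in>K. Poly_Mapping.lookup (f a) b * Poly_Mapping.lookup (g b) k) = Poly_Mapping.lookup (lin_ext g (f a)) k"
      using lookup_lin_ext_sup[OF fK] by metis
  qed
  also have "\<dots> = Poly_Mapping.lookup (lin_ext (\<lambda>a. lin_ext g (f a)) x) k"
    by (simp add: lookup_lin_ext)
  finally show "Poly_Mapping.lookup (lin_ext g (lin_ext f x)) k = Poly_Mapping.lookup (lin_ext (\<lambda>a. lin_ext g (f a)) x) k" .
qed

lemma lin_ext_cong:
  "(\<And>a. a \<in> Poly_Mapping.keys x \<Longrightarrow> f a = g a) \<Longrightarrow> lin_ext f x = lin_ext g x"
  unfolding lin_ext_def by (intro sum.cong refl) auto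

lemma lin_ext_single1:
  "lin_ext f (Poly_Mapping.single m (1::'k::{comm_semiring_1,zero_neq_one})) = f m"
  by (rule poly_mapping_eqI) (simp add: lookup_lin_ext)

lemma lin_ext_add:
  "lin_ext f (p + q) = lin_ext f p + lin_ext f q"
proof (rule poly_mapping_eqI)
  fix k
  let ?S = "Poly_Mapping.keys p \<union> Poly_Mapping.keys q"
  have fS: "finite ?S" by auto
  have "Poly_Mapping.keys (p+q) \<subseteq> ?S"
    by (auto simp: in_keys_iff lookup_add)
  then show "Poly_Mapping.lookup (lin_ext f (p + q)) k = Poly_Mapping.lookup (lin_ext f p + lin_ext f q) k"
    by (simp add: lookup_add lookup_lin_ext_sup[OF fS] distrib_right sum.distrib)
qed

lemma lin_ext_zero: "lin_ext f 0 = 0"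
  by (simp add: lin_ext_def)

lemma lin_ext_sum:
  "lin_ext f (sum h I) = (\<Sum>i\<in>I. lin_ext f (h i))"
  by (induction I rule: infinite_finite_induct) (auto simp: lin_ext_zero lin_ext_add)

lemma lin_fun_sup:
  assumes "finite S" "Poly_Mapping.keys x \<subseteq> S"
  shows "lin_fun f x = (\<Sum>a\<in>S. Poly_Mapping.lookup x a * f a)"
  unfolding lin_fun_def using assms
  by (intro sum.mono_neutral_left) (auto simp: in_keys_iff)

lemma lin_fun_comp:
  "lin_fun g (lin_ext f x) = lin_fun (\<lambda>a. lin_fun g (f a)) x"
proof -
  define K where "K = (\<Union>a\<in>Poly_Mapping.keys x. Poly_Mapping.keys (f a))"
  have fK: "finite K" unfolding K_def by auto
  have sub: "Poly_Mapping.keys (lin_ext f x) \<subseteq> K"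
  proof
    fix b assume "b \<in> Poly_Mapping.keys (lin_ext f x)"
    then have "(\<Sum>a\<in>Poly_Mapping.keys x. Poly_Mapping.lookup x a * Poly_Mapping.lookup (f a) b) \<noteq> 0"
      by (simp add: in_keys_iff lookup_lin_ext)
    then obtain a where "a \<in> Poly_Mapping.keys x" "Poly_Mapping.lookup (f a) b \<noteq> 0"
      by (metis (no_types, lifting) mult_zero_right sum.neutral)
    then show "b \<in> K" unfolding K_def by (auto simp: in_keys_iff)
  qed
  have "lin_fun g (lin_ext f x) =
     (\<Sum>b\<in>K. (\<Sum>a\<in>Poly_Mapping.keys x. Poly_Mapping.lookup x a * Poly_Mapping.lookup (f a) b) * g b)"
    by (subst lin_fun_sup[OF fK sub]) (simp add: lookup_lin_ext)
  also have "\<dots> = (\<Sum>a\<in>Poly_Mapping.keys x. Poly_Mapping.lookup x a * (\<Sum>b\<in>K. Poly_Mapping.lookup (f a) b * g b))"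
    by (simp add: sum_distrib_left sum_distrib_right mult.assoc sum.swap[of _ K])
  also have "\<dots> = (\<Sum>a\<in>Poly_Mapping.keys x. Poly_Mapping.lookup x a * lin_fun g (f a))"
  proof (intro sum.cong refl arg_cong2[where f="(*)"])
    fix a assume "a \<in> Poly_Mapping.keys x"
    then have "Poly_Mapping.keys (f a) \<subseteq> K" unfolding K_def by auto
    then show "(\<Sum>b\<in>K. Poly_Mapping.lookup (f a) b * g b) = lin_fun g (f a)"
      using lin_fun_sup[OF fK] by metis
  qed
  also have "\<dots> = lin_fun (\<lambda>a. lin_fun g (f a)) x"
    by (simp add: lin_fun_def)
  finally show ?thesis .
qed

lemma lin_fun_single1:
  "lin_fun f (Poly_Mapping.single m (1::'k::{comm_semiring_1,zero_neq_one})) = f m"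
  by (simp add: lin_fun_def)

lemma lin_fun_cong:
  "(\<And>a. a \<in> Poly_Mapping.keys x \<Longrightarrow> f a = g a) \<Longrightarrow> lin_fun f x = lin_fun g x"
  unfolding lin_fun_def by (intro sum.cong refl) auto

lemma std_map_mono:
  assumes "finite X" "x \<in> X" "y \<in> X" "x < y"
  shows "std_map X x < std_map X y"
proof -
  have "y \<in> {z \<in> X. z \<le> y}" "y \<notin> {z \<in> X. z \<le> x}" using assms by auto
  moreover have "{z \<in> X. z \<le> x} \<subseteq> {z \<in> X. z \<le> y}" using assms by auto
  ultimately have "{z \<in> X. z \<le> x} \<subset> {z \<in> X. z \<le> y}" by blast
  then show ?thesis unfolding std_map_def using assms(1)
    by (intro psubset_card_mono) auto
qed

lemma std_map_less_iff:
  assumes "finite X" "x \<in> X" "y \<in> X"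
  shows "std_map X x < std_map X y \<longleftrightarrow> x < y"
  using std_map_mono[OF assms(1)] assms
  by (metis linorder_neqE_nat order_less_asym order_less_irrefl)

lemma std_map_le_iff:
  assumes "finite X" "x \<in> X" "y \<in> X"
  shows "std_map X x \<le> std_map X y \<longleftrightarrow> x \<le> y"
  using std_map_less_iff[OF assms(1) assms(3) assms(2)] by linarith

lemma std_map_inj: "finite X \<Longrightarrow> inj_on (std_map X) X"
  unfolding inj_on_def using std_map_less_iff
  by (metis linorder_neqE_nat order_less_irrefl)

lemma std_map_range:
  assumes "finite X" "x \<in> X"
  shows "std_map X x \<in> {1..card X}"
proof -
  have "{z \<in> X. z \<le> x} \<noteq> {}" using assms by auto
  then have "card {z \<in> X. z \<le> x} \<ge> 1" using assms(1)
    by (simp add: Suc_leI card_gt_0_iff)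
  moreover have "card {z \<in> X. z \<le> x} \<le> card X" using assms(1) by (intro card_mono) auto
  ultimately show ?thesis unfolding std_map_def by auto
qed

lemma std_map_image:
  assumes "finite X"
  shows "std_map X ` X = {1..card X}"
proof (rule card_subset_eq)
  show "std_map X ` X \<subseteq> {1..card X}" using std_map_range[OF assms] by auto
  show "card (std_map X ` X) = card {1..card X}"
    using card_image[OF std_map_inj[OF assms]] by simp
qed simp

lemma std_map_sub:
  assumes "finite X" "Y \<subseteq> X" "y \<in> Y"
  shows "std_map (std_map X ` Y) (std_map X y) = std_map Y y"
proof -
  have "{w \<in> std_map X ` Y. w \<le> std_map X y} = std_map X ` {z \<in> Y. z \<le> y}"
  proof (intro equalityI subsetI)
    fix w assume "w \<in> {w \<in> std_map X ` Y. w \<le> std_map X y}"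
    then obtain z where "z \<in> Y" "w = std_map X z" "std_map X z \<le> std_map X y" by auto
    then show "w \<in> std_map X ` {z \<in> Y. z \<le> y}" using assms std_map_le_iff[OF assms(1), of z y] by auto
  qed (use assms std_map_le_iff[OF assms(1)] in auto)
  moreover have "inj_on (std_map X) {z \<in> Y. z \<le> y}"
    by (rule inj_on_subset[OF std_map_inj[OF assms(1)]]) (use assms(2) in auto)
  ultimately show ?thesis unfolding std_map_def[of "std_map X ` Y"]
    by (simp add: card_image std_map_def[of Y])
qed

lemma restr_alt: "restr P X = (\<lambda>B. std_map X ` (B \<inter> X)) ` {B \<in> P. B \<inter> X \<noteq> {}}"
  unfolding restr_def by auto

lemma Collect_image: "{C \<in> f ` A. Q C} = f ` {a \<in> A. Q (f a)}"
  by auto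

lemma restr_restr:
  assumes "finite X" "Y \<subseteq> X"
  shows "restr (restr P X) (std_map X ` Y) = restr P Y"
proof -
  let ?s = "std_map X"
  have inj: "inj_on ?s X" by (rule std_map_inj[OF assms(1)])
  have fY: "finite Y" using assms finite_subset by blast
  have key: "(\<lambda>C. std_map (?s ` Y) ` C) (?s ` (B \<inter> X) \<inter> ?s ` Y) = std_map Y ` (B \<inter> Y)"
    and ne: "?s ` (B \<inter> X) \<inter> ?s ` Y \<noteq> {} \<longleftrightarrow> B \<inter> Y \<noteq> {}" for B
  proof -
    have e: "?s ` (B \<inter> X) \<inter> ?s ` Y = ?s ` (B \<inter> Y)"
      using inj assms(2) by (auto simp: inj_on_def)
    show "(\<lambda>C. std_map (?s ` Y) ` C) (?s ` (B \<inter> X) \<inter> ?s ` Y) = std_map Y ` (B \<inter> Y)"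
      unfolding e image_image using std_map_sub[OF assms] by auto
    show "?s ` (B \<inter> X) \<inter> ?s ` Y \<noteq> {} \<longleftrightarrow> B \<inter> Y \<noteq> {}" unfolding e by simp
  qed
  have "restr (restr P X) (?s ` Y) = (\<lambda>C. std_map (?s ` Y) ` (C \<inter> ?s ` Y)) ` {C \<in> restr P X. C \<inter> ?s ` Y \<noteq> {}}"
    by (rule restr_alt)
  also have "{C \<in> restr P X. C \<inter> ?s ` Y \<noteq> {}} = (\<lambda>B. ?s ` (B \<inter> X)) ` {B \<in> {B \<in> P. B \<inter> X \<noteq> {}}. ?s ` (B \<inter> X) \<inter> ?s ` Y \<noteq> {}}"
    unfolding restr_alt[of P X] by (rule Collect_image)
  also have "{B \<in> {B \<in> P. B \<inter> X \<noteq> {}}. ?s ` (B \<inter> X) \<inter> ?s ` Y \<noteq> {}} = {B \<in> P. B \<inter> Y \<noteq> {}}"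
    using ne assms(2) by blast
  finally show ?thesis unfolding image_image restr_alt[of P Y] using key by simp
qed


lemma partition_on_restr:
  assumes "partition_on A P" "finite X" "X \<subseteq> A"
  shows "partition_on {1..card X} (restr P X)"
proof -
  let ?s = "std_map X"
  have inj: "inj_on ?s X" by (rule std_map_inj[OF assms(2)])
  have U: "\<Union>P = A" "{} \<notin> P" and D: "\<And>B B'. B \<in> P \<Longrightarrow> B' \<in> P \<Longrightarrow> B \<noteq> B' \<Longrightarrow> B \<inter> B' = {}"
    using assms(1) unfolding partition_on_def disjoint_def by auto
  have "\<Union>(restr P X) = ?s ` X"
    unfolding restr_alt using U assms(3) by auto
  then have "\<Union>(restr P X) = {1..card X}" using std_map_image[OF assms(2)] by simp
  moreover have "{} \<notin> restr P X" unfolding restr_alt by auto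
  moreover have "disjoint (restr P X)"
    unfolding disjoint_def restr_alt
  proof (clarify)
    fix B B' assume "B \<in> P" "B' \<in> P" "?s ` (B \<inter> X) \<noteq> ?s ` (B' \<inter> X)"
    then have "B \<noteq> B'" by auto
    then have "B \<inter> B' = {}" using D \<open>B \<in> P\<close> \<open>B' \<in> P\<close> by auto
    then show "?s ` (B \<inter> X) \<inter> ?s ` (B' \<inter> X) = {}"
      using inj unfolding inj_on_def by auto
  qed
  ultimately show ?thesis unfolding partition_on_def by auto
qed

lemma noncrossingD:
  "noncrossing P \<Longrightarrow> B1 \<in> P \<Longrightarrow> B2 \<in> P \<Longrightarrow> B1 \<noteq> B2 \<Longrightarrow> a \<in> B1 \<Longrightarrow> b \<in> B1
    \<Longrightarrow> c \<in> B2 \<Longrightarrow> d \<in> B2 \<Longrightarrow> a < c \<Longrightarrow> c < b \<Longrightarrow> b < d \<Longrightarrow> False"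
  unfolding noncrossing_def
  apply (erule notE)
  apply (rule bexI[of _ B1], rule bexI[of _ B2])
    apply (rule conjI, assumption)
    apply (rule exI[of _ a], rule exI[of _ b], rule exI[of _ c], rule exI[of _ d])
  by simp_all

lemma noncrossing_restr:
  assumes "noncrossing P" "finite X"
  shows "noncrossing (restr P X)"
  unfolding noncrossing_def
proof (clarify)
  let ?s = "std_map X"
  fix C1 C2 a b c d
  assume C1: "C1 \<in> restr P X" and C2: "C2 \<in> restr P X" and ne: "C1 \<noteq> C2"
    and h: "a \<in> C1" "b \<in> C1" "c \<in> C2" "d \<in> C2" "a < c" "c < b" "b < d"
  from C1 obtain B1 where B1: "B1 \<in> P" "C1 = ?s ` (B1 \<inter> X)" unfolding restr_alt by auto
  from C2 obtain B2 where B2: "B2 \<in> P" "C2 = ?s ` (B2 \<inter> X)" unfolding restr_alt by auto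
  have "B1 \<noteq> B2" using ne B1 B2 by auto
  obtain a' where a': "a' \<in> B1" "a' \<in> X" "a = ?s a'" using h B1 by auto
  obtain b' where b': "b' \<in> B1" "b' \<in> X" "b = ?s b'" using h B1 by auto
  obtain c' where c': "c' \<in> B2" "c' \<in> X" "c = ?s c'" using h B2 by auto
  obtain d' where d': "d' \<in> B2" "d' \<in> X" "d = ?s d'" using h B2 by auto
  have "a' < c'" using h(5) a'(3) c'(3) std_map_less_iff[OF assms(2) a'(2) c'(2)] by simp
  moreover have "c' < b'" using h(6) b'(3) c'(3) std_map_less_iff[OF assms(2) c'(2) b'(2)] by simp
  moreover have "b' < d'" using h(7) b'(3) d'(3) std_map_less_iff[OF assms(2) b'(2) d'(2)] by simp
  ultimately show False using noncrossingD[OF assms(1) B1(1) B2(1) \<open>B1 \<noteq> B2\<close> a'(1) b'(1) c'(1) d'(1)] by blast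
qed

lemma refines_restr:
  assumes "refines P M"
  shows "refines (restr P X) (restr M X)"
  unfolding refines_def
proof
  let ?s = "std_map X"
  fix C assume "C \<in> restr M X"
  then obtain \<sigma> where \<sigma>: "\<sigma> \<in> M" "C = ?s ` (\<sigma> \<inter> X)" unfolding restr_alt by auto
  obtain S where S: "S \<subseteq> P" "\<sigma> = \<Union>S" using assms \<sigma>(1) unfolding refines_def by auto
  let ?S' = "(\<lambda>B. ?s ` (B \<inter> X)) ` {B \<in> S. B \<inter> X \<noteq> {}}"
  have "?S' \<subseteq> restr P X" unfolding restr_alt using S by auto
  moreover have "C = \<Union>?S'" using \<sigma> S by auto
  ultimately show "\<exists>S\<subseteq>restr P X. C = \<Union> S" by blast
qed

lemma refines_block_sub:
  assumes "partition_on A P" "refines P Q" "\<tau> \<in> Q" "B \<in> P" "B \<inter> \<tau> \<noteq> {}"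
  shows "B \<subseteq> \<tau>"
proof -
  obtain S where S: "S \<subseteq> P" "\<tau> = \<Union>S" using assms(2,3) unfolding refines_def by auto
  obtain x where "x \<in> B" "x \<in> \<tau>" using assms(5) by auto
  then obtain B' where "B' \<in> S" "x \<in> B'" using S by auto
  have "disjoint P" using assms(1) unfolding partition_on_def by simp
  then have "B' = B" using assms(4) S(1) \<open>x \<in> B\<close> \<open>x \<in> B'\<close> \<open>B' \<in> S\<close>
    by (meson disjointD disjoint_iff subsetD)
  then show ?thesis using S \<open>B' \<in> S\<close> by auto
qed

lemma NCP_finite: "finite (NCP n)"
proof -
  have "NCP n \<subseteq> Pow (Pow {1..n})" unfolding NCP_def partition_on_def by auto
  then show ?thesis by (rule finite_subset) auto
qed

lemma NCP_union: "P \<in> NCP n \<Longrightarrow> \<Union>P = {1..n}"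
  unfolding NCP_def partition_on_def by auto

lemma NCP_restr:
  assumes "P \<in> NCP n" "X \<subseteq> {1..n}"
  shows "restr P X \<in> NCP (card X)"
proof -
  have "finite X" using assms(2) finite_subset by blast
  then show ?thesis using assms partition_on_restr noncrossing_restr unfolding NCP_def by auto
qed

lemma NCP_partition: "P \<in> NCP n \<Longrightarrow> partition_on {1..n} P"
  unfolding NCP_def by auto

lemma NCP_card_union: "P \<in> NCP n \<Longrightarrow> card (\<Union>P) = n"
  using NCP_union by simp

lemma interval_iff:
  "P \<in> NCP n \<Longrightarrow> M \<in> interval P Q \<longleftrightarrow> M \<in> NCP n \<and> refines P M \<and> refines M Q"
  unfolding interval_def using NCP_card_union by auto

lemma block_in_some:
  assumes "partition_on A M" "partition_on A Q" "refines M Q" "\<sigma> \<in> M"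
  shows "\<exists>\<tau>\<in>Q. \<sigma> \<subseteq> \<tau>"
proof -
  have "\<sigma> \<noteq> {}" "\<sigma> \<subseteq> A" using assms(1,4) unfolding partition_on_def by auto
  then obtain x where "x \<in> \<sigma>" "x \<in> A" by auto
  then obtain \<tau> where "\<tau> \<in> Q" "x \<in> \<tau>" using assms(2) unfolding partition_on_def by auto
  then show ?thesis using refines_block_sub[OF assms(1,3) \<open>\<tau> \<in> Q\<close> assms(4)] \<open>x \<in> \<sigma>\<close> by auto
qed

lemma block_unique:
  assumes "partition_on A Q" "\<tau> \<in> Q" "\<tau>' \<in> Q" "\<sigma> \<noteq> {}" "\<sigma> \<subseteq> \<tau>" "\<sigma> \<subseteq> \<tau>'"
  shows "\<tau> = \<tau>'"
proof -
  have "disjoint Q" using assms(1) unfolding partition_on_def by simp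
  moreover have "\<tau> \<inter> \<tau>' \<noteq> {}" using assms(4,5,6) by auto
  ultimately show ?thesis using assms(2,3) by (meson disjointD)
qed

lemma restr_sub_alt:
  assumes "partition_on A M" "refines M Q" "\<tau> \<in> Q"
  shows "restr M \<tau> = (image (std_map \<tau>)) ` {\<sigma> \<in> M. \<sigma> \<subseteq> \<tau>}"
proof -
  have ne: "{} \<notin> M" using assms(1) unfolding partition_on_def by simp
  have e: "{B \<in> M. B \<inter> \<tau> \<noteq> {}} = {\<sigma> \<in> M. \<sigma> \<subseteq> \<tau>}"
  proof (intro equalityI subsetI)
    fix B assume "B \<in> {B \<in> M. B \<inter> \<tau> \<noteq> {}}"
    then show "B \<in> {\<sigma> \<in> M. \<sigma> \<subseteq> \<tau>}" using refines_block_sub[OF assms] by auto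
  next
    fix B assume "B \<in> {\<sigma> \<in> M. \<sigma> \<subseteq> \<tau>}"
    then show "B \<in> {B \<in> M. B \<inter> \<tau> \<noteq> {}}" using ne by (auto simp: Int_absorb2)
  qed
  show ?thesis unfolding restr_alt e by (intro image_cong refl) (simp add: Int_absorb2)
qed


lemma tt_props:
  assumes "finite X" "i \<in> {1..card X}"
  shows "the_inv_into X (std_map X) i \<in> X" "std_map X (the_inv_into X (std_map X) i) = i"
proof -
  have i: "i \<in> std_map X ` X" using std_map_image[OF assms(1)] assms(2) by simp
  show "the_inv_into X (std_map X) i \<in> X" by (rule the_inv_into_into[OF std_map_inj[OF assms(1)] i subset_refl])
  show "std_map X (the_inv_into X (std_map X) i) = i" by (rule f_the_inv_into_f[OF std_map_inj[OF assms(1)] i])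
qed

lemma tt_s:
  assumes "finite X" "x \<in> X"
  shows "the_inv_into X (std_map X) (std_map X x) = x"
  by (rule the_inv_into_f_f[OF std_map_inj[OF assms(1)] assms(2)])

lemma tt_less:
  assumes "finite X" "i \<in> {1..card X}" "j \<in> {1..card X}"
  shows "the_inv_into X (std_map X) i < the_inv_into X (std_map X) j \<longleftrightarrow> i < j"
  using std_map_less_iff[OF assms(1) tt_props(1)[OF assms(1) assms(2)] tt_props(1)[OF assms(1) assms(3)]]
  by (simp add: tt_props(2)[OF assms(1) assms(2)] tt_props(2)[OF assms(1) assms(3)])

lemma tt_inj:
  assumes "finite X"
  shows "inj_on (the_inv_into X (std_map X)) {1..card X}"
  unfolding inj_on_def using tt_less[OF assms] by (metis linorder_neqE_nat order_less_irrefl)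

lemma tt_img:
  assumes "finite X"
  shows "the_inv_into X (std_map X) ` {1..card X} = X"
  using std_map_image[OF assms] the_inv_into_onto[OF std_map_inj[OF assms]] by simp

lemma interval_surj:
  assumes P: "P \<in> NCP n" and Q: "Q \<in> NCP n" and PQ: "refines P Q"
    and g: "g \<in> PiE Q (\<lambda>\<tau>. {R \<in> NCP (card \<tau>). refines (restr P \<tau>) R})"
  shows "\<exists>M \<in> interval P Q. restrict (\<lambda>\<tau>. restr M \<tau>) Q = g"
proof -
  define tt where "tt \<tau> = the_inv_into \<tau> (std_map \<tau>)" for \<tau>
  define MM where "MM \<tau> = image (tt \<tau>) ` g \<tau>" for \<tau>
  define M where "M = \<Union>(MM ` Q)"
  have Pp: "partition_on {1..n} P" and Qp: "partition_on {1..n} Q" using P Q NCP_partition by auto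
  have Qsub: "\<tau> \<subseteq> {1..n}" if "\<tau> \<in> Q" for \<tau> using Qp that unfolding partition_on_def by auto
  have fin: "finite \<tau>" if "\<tau> \<in> Q" for \<tau> using Qsub[OF that] finite_subset by blast
  have gN: "g \<tau> \<in> NCP (card \<tau>)" "refines (restr P \<tau>) (g \<tau>)" if "\<tau> \<in> Q" for \<tau>
    using g that by auto
  have gp: "partition_on {1..card \<tau>} (g \<tau>)" if "\<tau> \<in> Q" for \<tau> using gN(1)[OF that] NCP_partition by auto
  have tt1: "tt \<tau> i \<in> \<tau>" "std_map \<tau> (tt \<tau> i) = i" if "\<tau> \<in> Q" "i \<in> {1..card \<tau>}" for \<tau> i
    unfolding tt_def using tt_props[OF fin[OF that(1)] that(2)] by auto
  have tt2: "tt \<tau> (std_map \<tau> x) = x" if "\<tau> \<in> Q" "x \<in> \<tau>" for \<tau> x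
    unfolding tt_def using tt_s[OF fin[OF that(1)] that(2)] .
  have ttless: "tt \<tau> i < tt \<tau> j \<longleftrightarrow> i < j" if "\<tau> \<in> Q" "i \<in> {1..card \<tau>}" "j \<in> {1..card \<tau>}" for \<tau> i j
    unfolding tt_def using tt_less[OF fin[OF that(1)] that(2,3)] .
  have ttinj: "inj_on (tt \<tau>) {1..card \<tau>}" if "\<tau> \<in> Q" for \<tau>
    unfolding tt_def using tt_inj[OF fin[OF that]] .
  have ttimg: "tt \<tau> ` {1..card \<tau>} = \<tau>" if "\<tau> \<in> Q" for \<tau>
    unfolding tt_def using tt_img[OF fin[OF that]] .
  have Cs: "C \<subseteq> {1..card \<tau>}" "C \<noteq> {}" if "\<tau> \<in> Q" "C \<in> g \<tau>" for \<tau> C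
    using gp[OF that(1)] that(2) unfolding partition_on_def by auto
  have gU: "\<Union>(g \<tau>) = {1..card \<tau>}" if "\<tau> \<in> Q" for \<tau>
    using gp[OF that] unfolding partition_on_def by auto
  have MMsub: "\<sigma> \<subseteq> \<tau>" "\<sigma> \<noteq> {}" if H: "\<tau> \<in> Q" "\<sigma> \<in> MM \<tau>" for \<tau> \<sigma>
  proof -
    obtain C where C: "C \<in> g \<tau>" "\<sigma> = tt \<tau> ` C" using H(2) unfolding MM_def by auto
    show "\<sigma> \<subseteq> \<tau>" using C Cs[OF H(1) C(1)] tt1[OF H(1)] by auto
    show "\<sigma> \<noteq> {}" using C Cs[OF H(1) C(1)] by auto
  qed
  have sMM: "std_map \<tau> ` (tt \<tau> ` C) = C" if "\<tau> \<in> Q" "C \<in> g \<tau>" for \<tau> C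
  proof -
    have "(\<lambda>x. std_map \<tau> (tt \<tau> x)) ` C = (\<lambda>x. x) ` C"
      using tt1(2)[OF that(1)] Cs(1)[OF that] by (intro image_cong refl) auto
    then show ?thesis unfolding image_image by simp
  qed
  have MMU: "\<Union>(MM \<tau>) = \<tau>" if "\<tau> \<in> Q" for \<tau>
  proof -
    have "\<Union>(MM \<tau>) = tt \<tau> ` \<Union>(g \<tau>)" unfolding MM_def by auto
    then show ?thesis using gU[OF that] ttimg[OF that] by simp
  qed
  have Qdisj: "\<tau>1 \<inter> \<tau>2 = {}" if "\<tau>1 \<in> Q" "\<tau>2 \<in> Q" "\<tau>1 \<noteq> \<tau>2" for \<tau>1 \<tau>2
    using Qp that unfolding partition_on_def by (meson disjointD)
  have MU: "\<Union>M = {1..n}"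
  proof -
    have "\<Union>M = (\<Union>\<tau>\<in>Q. \<Union>(MM \<tau>))" unfolding M_def by auto
    also have "\<dots> = \<Union>Q" using MMU by auto
    also have "\<dots> = {1..n}" using Qp unfolding partition_on_def by auto
    finally show ?thesis .
  qed
  have Mne: "{} \<notin> M" unfolding M_def using MMsub(2) by blast
  have Mdisj: "\<sigma>1 \<inter> \<sigma>2 = {}" if H: "\<sigma>1 \<in> M" "\<sigma>2 \<in> M" "\<sigma>1 \<noteq> \<sigma>2" for \<sigma>1 \<sigma>2
  proof -
    obtain \<tau>1 where t1: "\<tau>1 \<in> Q" "\<sigma>1 \<in> MM \<tau>1" using H(1) unfolding M_def by auto
    obtain \<tau>2 where t2: "\<tau>2 \<in> Q" "\<sigma>2 \<in> MM \<tau>2" using H(2) unfolding M_def by auto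
    show ?thesis
    proof (cases "\<tau>1 = \<tau>2")
      case False
      then show ?thesis using Qdisj[OF t1(1) t2(1)] MMsub(1)[OF t1] MMsub(1)[OF t2] by auto
    next
      case True
      obtain C1 where C1: "C1 \<in> g \<tau>1" "\<sigma>1 = tt \<tau>1 ` C1" using t1(2) unfolding MM_def by auto
      obtain C2 where C2: "C2 \<in> g \<tau>1" "\<sigma>2 = tt \<tau>1 ` C2" using t2(2) True unfolding MM_def by auto
      have "C1 \<noteq> C2" using C1 C2 H(3) by auto
      then have "C1 \<inter> C2 = {}" using gp[OF t1(1)] C1(1) C2(1) unfolding partition_on_def by (meson disjointD)
      then show ?thesis using C1 C2 ttinj[OF t1(1)] Cs(1)[OF t1(1) C1(1)] Cs(1)[OF t1(1) C2(1)]
        unfolding inj_on_def by blast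
    qed
  qed
  have Mp: "partition_on {1..n} M"
    unfolding partition_on_def disjoint_def using MU Mne Mdisj by auto
  have Mnc: "noncrossing M"
    unfolding noncrossing_def
  proof (clarify)
    fix \<sigma>1 \<sigma>2 a b c d
    assume s1: "\<sigma>1 \<in> M" and s2: "\<sigma>2 \<in> M" and ne: "\<sigma>1 \<noteq> \<sigma>2"
      and h: "a \<in> \<sigma>1" "b \<in> \<sigma>1" "c \<in> \<sigma>2" "d \<in> \<sigma>2" "a < c" "c < b" "b < d"
    obtain \<tau>1 where t1: "\<tau>1 \<in> Q" "\<sigma>1 \<in> MM \<tau>1" using s1 unfolding M_def by auto
    obtain \<tau>2 where t2: "\<tau>2 \<in> Q" "\<sigma>2 \<in> MM \<tau>2" using s2 unfolding M_def by auto
    show False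
    proof (cases "\<tau>1 = \<tau>2")
      case False
      have "a \<in> \<tau>1" "b \<in> \<tau>1" "c \<in> \<tau>2" "d \<in> \<tau>2" using h(1-4) MMsub(1)[OF t1] MMsub(1)[OF t2] by auto
      moreover have "noncrossing Q" using Q unfolding NCP_def by simp
      ultimately show False using noncrossingD[OF _ t1(1) t2(1) False _ _ _ _ h(5-7)] by blast
    next
      case True
      obtain C1 where C1: "C1 \<in> g \<tau>1" "\<sigma>1 = tt \<tau>1 ` C1" using t1(2) unfolding MM_def by auto
      obtain C2 where C2: "C2 \<in> g \<tau>1" "\<sigma>2 = tt \<tau>1 ` C2" using t2(2) True unfolding MM_def by auto
      have "C1 \<noteq> C2" using C1 C2 ne by auto
      have C1s: "C1 \<subseteq> {1..card \<tau>1}" and C2s: "C2 \<subseteq> {1..card \<tau>1}" using Cs(1)[OF t1(1)] C1 C2 by auto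
      obtain a' where a': "a' \<in> C1" "a = tt \<tau>1 a'" using h(1) C1(2) by auto
      obtain b' where b': "b' \<in> C1" "b = tt \<tau>1 b'" using h(2) C1(2) by auto
      obtain c' where c': "c' \<in> C2" "c = tt \<tau>1 c'" using h(3) C2(2) by auto
      obtain d' where d': "d' \<in> C2" "d = tt \<tau>1 d'" using h(4) C2(2) by auto
      have ia: "a' \<in> {1..card \<tau>1}" using a'(1) C1s by blast
      have ib: "b' \<in> {1..card \<tau>1}" using b'(1) C1s by blast
      have ic: "c' \<in> {1..card \<tau>1}" using c'(1) C2s by blast
      have id: "d' \<in> {1..card \<tau>1}" using d'(1) C2s by blast
      have "a' < c'" using h(5) ttless[OF t1(1) ia ic] a'(2) c'(2) by simp
      moreover have "c' < b'" using h(6) ttless[OF t1(1) ic ib] b'(2) c'(2) by simp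
      moreover have "b' < d'" using h(7) ttless[OF t1(1) ib id] b'(2) d'(2) by simp
      moreover have "noncrossing (g \<tau>1)" using gN(1)[OF t1(1)] unfolding NCP_def by simp
      ultimately show False
        using noncrossingD[OF _ C1(1) C2(1) \<open>C1 \<noteq> C2\<close> a'(1) b'(1) c'(1) d'(1)] by blast
    qed
  qed
  have MN: "M \<in> NCP n" unfolding NCP_def using Mp Mnc by auto
  have rPM: "refines P M"
    unfolding refines_def
  proof
    fix \<sigma> assume "\<sigma> \<in> M"
    then obtain \<tau> where t: "\<tau> \<in> Q" "\<sigma> \<in> MM \<tau>" unfolding M_def by auto
    obtain C where C: "C \<in> g \<tau>" "\<sigma> = tt \<tau> ` C" using t(2) unfolding MM_def by auto
    obtain S where S: "S \<subseteq> restr P \<tau>" "C = \<Union>S" using gN(2)[OF t(1)] C(1) unfolding refines_def by auto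
    have rP: "restr P \<tau> = (image (std_map \<tau>)) ` {B \<in> P. B \<subseteq> \<tau>}"
      by (rule restr_sub_alt[OF Pp PQ t(1)])
    define S0 where "S0 = {B \<in> P. B \<subseteq> \<tau> \<and> std_map \<tau> ` B \<in> S}"
    have "S = (image (std_map \<tau>)) ` S0" unfolding S0_def using S(1) rP by auto
    then have "\<sigma> = (\<Union>B\<in>S0. tt \<tau> ` (std_map \<tau> ` B))" using C S by auto
    also have "\<dots> = \<Union>S0"
    proof -
      have "tt \<tau> ` (std_map \<tau> ` B) = B" if "B \<in> S0" for B
      proof -
        have "B \<subseteq> \<tau>" using that unfolding S0_def by auto
        then have "(\<lambda>x. tt \<tau> (std_map \<tau> x)) ` B = (\<lambda>x. x) ` B"
          using tt2[OF t(1)] by (intro image_cong refl) auto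
        then show ?thesis unfolding image_image by simp
      qed
      then show ?thesis by auto
    qed
    finally have "\<sigma> = \<Union>S0" .
    moreover have "S0 \<subseteq> P" unfolding S0_def by auto
    ultimately show "\<exists>S\<subseteq>P. \<sigma> = \<Union>S" by blast
  qed
  have rMQ: "refines M Q"
    unfolding refines_def
  proof
    fix \<tau> assume t: "\<tau> \<in> Q"
    have "MM \<tau> \<subseteq> M" unfolding M_def using t by auto
    then show "\<exists>S\<subseteq>M. \<tau> = \<Union>S" using MMU[OF t] by metis
  qed
  have Mint: "M \<in> interval P Q" using interval_iff[OF P] MN rPM rMQ by auto
  have "restrict (\<lambda>\<tau>. restr M \<tau>) Q = g"
  proof
    fix \<tau>
    show "restrict (\<lambda>\<tau>. restr M \<tau>) Q \<tau> = g \<tau>"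
    proof (cases "\<tau> \<in> Q")
      case False
      then show ?thesis using PiE_arb[OF g False] by simp
    next
      case t: True
      have "{\<sigma> \<in> M. \<sigma> \<subseteq> \<tau>} = MM \<tau>"
      proof (intro equalityI subsetI)
        fix \<sigma> assume "\<sigma> \<in> {\<sigma> \<in> M. \<sigma> \<subseteq> \<tau>}"
        then obtain \<tau>' where t': "\<tau>' \<in> Q" "\<sigma> \<in> MM \<tau>'" "\<sigma> \<subseteq> \<tau>" unfolding M_def by auto
        have "\<tau>' = \<tau>" using block_unique[OF Qp t'(1) t MMsub(2)[OF t'(1,2)] MMsub(1)[OF t'(1,2)] t'(3)] .
        then show "\<sigma> \<in> MM \<tau>" using t' by simp
      next
        fix \<sigma> assume "\<sigma> \<in> MM \<tau>"
        then show "\<sigma> \<in> {\<sigma> \<in> M. \<sigma> \<subseteq> \<tau>}" using t MMsub(1)[OF t] unfolding M_def by auto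
      qed
      then have "restr M \<tau> = (image (std_map \<tau>)) ` MM \<tau>" using restr_sub_alt[OF Mp rMQ t] by (simp only:)
      also have "\<dots> = g \<tau>"
      proof -
        have "(image (std_map \<tau>)) ` MM \<tau> = (\<lambda>C. std_map \<tau> ` (tt \<tau> ` C)) ` g \<tau>"
          unfolding MM_def by (rule image_image)
        also have "\<dots> = (\<lambda>C. C) ` g \<tau>" using sMM[OF t] by (intro image_cong refl) auto
        finally show ?thesis by simp
      qed
      finally show ?thesis using t by simp
    qed
  qed
  then show ?thesis using Mint by blast
qed

lemma NCP_finite_blocks: "M \<in> NCP n \<Longrightarrow> finite M"
proof -
  assume "M \<in> NCP n"
  then have "M \<subseteq> Pow {1..n}" unfolding NCP_def partition_on_def by auto
  then show "finite M" by (rule finite_subset) auto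
qed

lemma NCP_block_fin: "Q \<in> NCP n \<Longrightarrow> \<tau> \<in> Q \<Longrightarrow> finite \<tau>"
proof -
  assume "Q \<in> NCP n" "\<tau> \<in> Q"
  then have "\<tau> \<subseteq> {1..n}" unfolding NCP_def partition_on_def by auto
  then show "finite \<tau>" by (rule finite_subset) auto
qed

lemma interval_inj:
  assumes P: "P \<in> NCP n" and Q: "Q \<in> NCP n"
  shows "inj_on (\<lambda>M. restrict (\<lambda>\<tau>. restr M \<tau>) Q) (interval P Q)"
proof (rule inj_onI)
  fix M M' assume M: "M \<in> interval P Q" and M': "M' \<in> interval P Q"
    and eq: "restrict (\<lambda>\<tau>. restr M \<tau>) Q = restrict (\<lambda>\<tau>. restr M' \<tau>) Q"
  have Qp: "partition_on {1..n} Q" using Q NCP_partition by auto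
  have Mp: "partition_on {1..n} M" and rMQ: "refines M Q" using M interval_iff[OF P] NCP_partition by auto
  have Mp': "partition_on {1..n} M'" and rMQ': "refines M' Q" using M' interval_iff[OF P] NCP_partition by auto
  have part: "{\<sigma> \<in> M. \<sigma> \<subseteq> \<tau>} = {\<sigma> \<in> M'. \<sigma> \<subseteq> \<tau>}" if t: "\<tau> \<in> Q" for \<tau>
  proof -
    have "finite \<tau>" using NCP_block_fin[OF Q t] .
    have inj: "inj_on (image (std_map \<tau>)) (Pow \<tau>)"
      by (rule inj_on_image_Pow[OF std_map_inj[OF \<open>finite \<tau>\<close>]])
    have "restr M \<tau> = restr M' \<tau>" using fun_cong[OF eq, of \<tau>] t by simp
    then have "(image (std_map \<tau>)) ` {\<sigma> \<in> M. \<sigma> \<subseteq> \<tau>} = (image (std_map \<tau>)) ` {\<sigma> \<in> M'. \<sigma> \<subseteq> \<tau>}"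
      using restr_sub_alt[OF Mp rMQ t] restr_sub_alt[OF Mp' rMQ' t] by simp
    moreover have "{\<sigma> \<in> M. \<sigma> \<subseteq> \<tau>} \<subseteq> Pow \<tau>" "{\<sigma> \<in> M'. \<sigma> \<subseteq> \<tau>} \<subseteq> Pow \<tau>" by auto
    ultimately show ?thesis using inj_on_image_eq_iff[OF inj] by metis
  qed
  have cover: "N = (\<Union>\<tau>\<in>Q. {\<sigma> \<in> N. \<sigma> \<subseteq> \<tau>})" if "partition_on {1..n} N" "refines N Q" for N
    using block_in_some[OF that(1) Qp that(2)] by auto
  have "M = (\<Union>\<tau>\<in>Q. {\<sigma> \<in> M. \<sigma> \<subseteq> \<tau>})" by (rule cover[OF Mp rMQ])
  also have "\<dots> = (\<Union>\<tau>\<in>Q. {\<sigma> \<in> M'. \<sigma> \<subseteq> \<tau>})" using part by (intro SUP_cong refl) 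
  also have "\<dots> = M'" by (rule cover[OF Mp' rMQ', symmetric])
  finally show "M = M'" .
qed

lemma interval_into:
  assumes P: "P \<in> NCP n" and Q: "Q \<in> NCP n" and M: "M \<in> interval P Q"
  shows "restrict (\<lambda>\<tau>. restr M \<tau>) Q \<in> PiE Q (\<lambda>\<tau>. {R \<in> NCP (card \<tau>). refines (restr P \<tau>) R})"
proof -
  have Qp: "partition_on {1..n} Q" using Q NCP_partition by auto
  have MN: "M \<in> NCP n" and rPM: "refines P M" using M interval_iff[OF P] by auto
  have "restr M \<tau> \<in> NCP (card \<tau>)" "refines (restr P \<tau>) (restr M \<tau>)" if t: "\<tau> \<in> Q" for \<tau>
  proof -
    have "\<tau> \<subseteq> {1..n}" using Qp t unfolding partition_on_def by auto
    then show "restr M \<tau> \<in> NCP (card \<tau>)" using NCP_restr[OF MN] by auto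
    show "refines (restr P \<tau>) (restr M \<tau>)" by (rule refines_restr[OF rPM])
  qed
  then show ?thesis by auto
qed

lemma interval_bij:
  assumes P: "P \<in> NCP n" and Q: "Q \<in> NCP n" and PQ: "refines P Q"
  shows "bij_betw (\<lambda>M. restrict (\<lambda>\<tau>. restr M \<tau>) Q) (interval P Q)
           (PiE Q (\<lambda>\<tau>. {R \<in> NCP (card \<tau>). refines (restr P \<tau>) R}))"
  unfolding bij_betw_def
proof
  show "inj_on (\<lambda>M. restrict (\<lambda>\<tau>. restr M \<tau>) Q) (interval P Q)" by (rule interval_inj[OF P Q])
  show "(\<lambda>M. restrict (\<lambda>\<tau>. restr M \<tau>) Q) ` interval P Q = (PiE Q (\<lambda>\<tau>. {R \<in> NCP (card \<tau>). refines (restr P \<tau>) R}))"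
  proof (intro equalityI subsetI)
    fix g assume "g \<in> (\<lambda>M. restrict (\<lambda>\<tau>. restr M \<tau>) Q) ` interval P Q"
    then obtain M where M: "M \<in> interval P Q" and gM: "g = restrict (\<lambda>\<tau>. restr M \<tau>) Q" by blast
    show "g \<in> (PiE Q (\<lambda>\<tau>. {R \<in> NCP (card \<tau>). refines (restr P \<tau>) R}))"
      unfolding gM by (rule interval_into[OF P Q M])
  next
    fix g assume "g \<in> (PiE Q (\<lambda>\<tau>. {R \<in> NCP (card \<tau>). refines (restr P \<tau>) R}))"
    then obtain M where M: "M \<in> interval P Q" and gM: "restrict (\<lambda>\<tau>. restr M \<tau>) Q = g"
      using interval_surj[OF P Q PQ] by blast
    show "g \<in> (\<lambda>M. restrict (\<lambda>\<tau>. restr M \<tau>) Q) ` interval P Q"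
      by (rule image_eqI[where f="\<lambda>M. restrict (\<lambda>\<tau>. restr M \<tau>) Q", OF gM[symmetric] M])
  qed
qed

lemma sum_mset_set_disj:
  assumes "finite I" "\<And>i. i \<in> I \<Longrightarrow> finite (F i)"
    "\<And>i j. i \<in> I \<Longrightarrow> j \<in> I \<Longrightarrow> i \<noteq> j \<Longrightarrow> F i \<inter> F j = {}"
  shows "(\<Sum>i\<in>I. mset_set (F i)) = mset_set (\<Union>i\<in>I. F i)"
  using assms
proof (induction I rule: finite_induct)
  case empty
  then show ?case by simp
next
  case (insert i I)
  have "(\<Sum>i\<in>insert i I. mset_set (F i)) = mset_set (F i) + mset_set (\<Union>i\<in>I. F i)"
    using insert by simp
  also have "\<dots> = mset_set (F i \<union> (\<Union>i\<in>I. F i))"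
    by (rule mset_set_Union[symmetric]) (use insert in auto)
  finally show ?case by simp
qed

lemma quot_fst: "finite Q \<Longrightarrow> (\<Sum>\<tau>\<in>Q. {#restr M \<tau>#}) = quot M Q"
  unfolding quot_def by (simp add: sum_unfold_sum_mset)

lemma quot_snd:
  assumes P: "P \<in> NCP n" and Q: "Q \<in> NCP n" and PQ: "refines P Q" and M: "M \<in> interval P Q"
  shows "(\<Sum>\<tau>\<in>Q. quot (restr P \<tau>) (restr M \<tau>)) = quot P M"
proof -
  have Qp: "partition_on {1..n} Q" using Q NCP_partition by auto
  have MN: "M \<in> NCP n" and rMQ: "refines M Q" using M interval_iff[OF P] by auto
  have Mp: "partition_on {1..n} M" using MN NCP_partition by auto
  have fM: "finite M" using NCP_finite_blocks[OF MN] .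
  have fQ: "finite Q" using NCP_finite_blocks[OF Q] .
  define Mt where "Mt \<tau> = {\<sigma> \<in> M. \<sigma> \<subseteq> \<tau>}" for \<tau>
  have fin: "finite \<tau>" if t: "\<tau> \<in> Q" for \<tau>
    using NCP_block_fin[OF Q t] .
  have each: "quot (restr P \<tau>) (restr M \<tau>) = image_mset (restr P) (mset_set (Mt \<tau>))" if t: "\<tau> \<in> Q" for \<tau>
  proof -
    have inj: "inj_on (image (std_map \<tau>)) (Mt \<tau>)"
      by (rule inj_on_subset[OF inj_on_image_Pow[OF std_map_inj[OF fin[OF t]]]]) (auto simp: Mt_def)
    have "restr M \<tau> = (image (std_map \<tau>)) ` Mt \<tau>" unfolding Mt_def by (rule restr_sub_alt[OF Mp rMQ t])
    then have "mset_set (restr M \<tau>) = image_mset (image (std_map \<tau>)) (mset_set (Mt \<tau>))"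
      using image_mset_mset_set[OF inj] by simp
    then have "quot (restr P \<tau>) (restr M \<tau>) = image_mset (\<lambda>\<sigma>. restr (restr P \<tau>) (std_map \<tau> ` \<sigma>)) (mset_set (Mt \<tau>))"
      unfolding quot_def by (simp add: image_mset.compositionality comp_def)
    also have "\<dots> = image_mset (restr P) (mset_set (Mt \<tau>))"
    proof (rule image_mset_cong)
      fix \<sigma> assume "\<sigma> \<in># mset_set (Mt \<tau>)"
      then have "\<sigma> \<subseteq> \<tau>" using fM unfolding Mt_def by (auto dest: elem_mset_set[THEN iffD1, rotated])
      then show "restr (restr P \<tau>) (std_map \<tau> ` \<sigma>) = restr P \<sigma>" by (rule restr_restr[OF fin[OF t]])
    qed
    finally show ?thesis .
  qed
  have "(\<Sum>\<tau>\<in>Q. quot (restr P \<tau>) (restr M \<tau>)) = (\<Sum>\<tau>\<in>Q. image_mset (restr P) (mset_set (Mt \<tau>)))"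
    using each by simp
  also have "\<dots> = image_mset (restr P) (\<Sum>\<tau>\<in>Q. mset_set (Mt \<tau>))"
    by (induction Q rule: infinite_finite_induct) auto
  also have "(\<Sum>\<tau>\<in>Q. mset_set (Mt \<tau>)) = mset_set (\<Union>\<tau>\<in>Q. Mt \<tau>)"
  proof (rule sum_mset_set_disj[OF fQ])
    show "finite (Mt \<tau>)" for \<tau> using fM unfolding Mt_def by auto
    fix \<tau> \<tau>' assume t: "\<tau> \<in> Q" "\<tau>' \<in> Q" "\<tau> \<noteq> \<tau>'"
    show "Mt \<tau> \<inter> Mt \<tau>' = {}"
    proof (rule ccontr)
      assume "Mt \<tau> \<inter> Mt \<tau>' \<noteq> {}"
      then obtain \<sigma> where s: "\<sigma> \<in> M" "\<sigma> \<subseteq> \<tau>" "\<sigma> \<subseteq> \<tau>'" unfolding Mt_def by auto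
      have "\<sigma> \<noteq> {}" using Mp s(1) unfolding partition_on_def by auto
      then show False using block_unique[OF Qp t(1,2) _ s(2,3)] t(3) by simp
    qed
  qed
  also have "(\<Union>\<tau>\<in>Q. Mt \<tau>) = M"
    unfolding Mt_def using block_in_some[OF Mp Qp rMQ] by auto
  finally show ?thesis unfolding quot_def .
qed

lemma prod_single1:
  "(\<Prod>i\<in>I. Poly_Mapping.single (k i) (1::'b::comm_semiring_1)) =
     Poly_Mapping.single (\<Sum>i\<in>I. (k i :: 'a::comm_monoid_add)) 1"
  by (induction I rule: infinite_finite_induct) (auto simp: mult_single)

lemma basis_delta:
  assumes P: "P \<in> NCP n" and Q: "Q \<in> NCP n" and PQ: "refines P Q"
  shows "(opd_delta_mono (quot P Q) :: (_ \<Rightarrow>\<^sub>0 'k::field)) = Phi_tensor (lat_delta_basis (P, Q))"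
proof -
  define A where "A \<tau> = {R \<in> NCP (card \<tau>). refines (restr P \<tau>) R}" for \<tau>
  define f where "f \<tau> R = Poly_Mapping.single ({#R#}, quot (restr P \<tau>) R) (1::'k)" for \<tau> R
  define h where "h M = restrict (\<lambda>\<tau>. restr M \<tau>) Q" for M
  have Pp: "partition_on {1..n} P" and Qp: "partition_on {1..n} Q" using P Q NCP_partition by auto
  have fQ: "finite Q" using NCP_finite_blocks[OF Q] .
  have finA: "finite (A \<tau>)" for \<tau> unfolding A_def using NCP_finite by auto
  have gen: "opd_delta_gen (restr P \<tau>) = (\<Sum>R\<in>A \<tau>. f \<tau> R)" if t: "\<tau> \<in> Q" for \<tau>
  proof -
    have "\<tau> \<subseteq> {1..n}" using Qp t unfolding partition_on_def by auto
    then have "partition_on {1..card \<tau>} (restr P \<tau>)"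
      using partition_on_restr[OF Pp] NCP_block_fin[OF Q t] by auto
    then have "card (\<Union>(restr P \<tau>)) = card \<tau>" unfolding partition_on_def by auto
    then show ?thesis unfolding opd_delta_gen_def A_def f_def by simp
  qed
  have "(opd_delta_mono (quot P Q) :: (_ \<Rightarrow>\<^sub>0 'k)) = (\<Prod>\<tau>\<in>Q. opd_delta_gen (restr P \<tau>))"
    unfolding opd_delta_mono_def quot_def by (simp add: prod_unfold_prod_mset image_mset.compositionality comp_def)
  also have "\<dots> = (\<Prod>\<tau>\<in>Q. \<Sum>R\<in>A \<tau>. f \<tau> R)" using gen by simp
  also have "\<dots> = (\<Sum>g\<in>PiE Q A. \<Prod>\<tau>\<in>Q. f \<tau> (g \<tau>))" by (rule prod_sum_PiE[OF fQ finA])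
  also have "\<dots> = (\<Sum>g\<in>PiE Q A. Poly_Mapping.single (\<Sum>\<tau>\<in>Q. ({#g \<tau>#}, quot (restr P \<tau>) (g \<tau>))) 1)"
    unfolding f_def by (simp add: prod_single1)
  also have "\<dots> = (\<Sum>M\<in>interval P Q. Poly_Mapping.single (\<Sum>\<tau>\<in>Q. ({#h M \<tau>#}, quot (restr P \<tau>) (h M \<tau>))) 1)"
    using sum.reindex_bij_betw[OF interval_bij[OF P Q PQ], folded A_def h_def,
        of "\<lambda>g. Poly_Mapping.single (\<Sum>\<tau>\<in>Q. ({#g \<tau>#}, quot (restr P \<tau>) (g \<tau>))) (1::'k)"] by simp
  also have "\<dots> = (\<Sum>M\<in>interval P Q. Poly_Mapping.single (quot M Q, quot P M) (1::'k))"
  proof (rule sum.cong[OF refl])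
    fix M assume M: "M \<in> interval P Q"
    have "(\<Sum>\<tau>\<in>Q. ({#h M \<tau>#}, quot (restr P \<tau>) (h M \<tau>))) = (\<Sum>\<tau>\<in>Q. ({#restr M \<tau>#}, quot (restr P \<tau>) (restr M \<tau>)))"
      unfolding h_def by (intro sum.cong refl) simp
    also have "\<dots> = (quot M Q, quot P M)"
      unfolding sum_prod using quot_fst[OF fQ] quot_snd[OF P Q PQ M] by simp
    finally show "Poly_Mapping.single (\<Sum>\<tau>\<in>Q. ({#h M \<tau>#}, quot (restr P \<tau>) (h M \<tau>))) 1 = Poly_Mapping.single (quot M Q, quot P M) (1::'k)"
      by simp
  qed
  also have "\<dots> = Phi_tensor (lat_delta_basis (P, Q))"
    unfolding lat_delta_basis_def Phi_tensor_def by (simp add: lin_ext_sum lin_ext_single1)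
  finally show ?thesis .
qed

lemma basis_eps:
  assumes P: "P \<in> NCP n" and Q: "Q \<in> NCP n" and PQ: "refines P Q"
  shows "prod_mset (image_mset opd_eps_gen (quot P Q)) = (if P = Q then 1 else (0::'k::field))"
proof -
  have Pp: "partition_on {1..n} P" and Qp: "partition_on {1..n} Q" using P Q NCP_partition by auto
  have fQ: "finite Q" using NCP_finite_blocks[OF Q] .
  have fP: "finite P" using NCP_finite_blocks[OF P] .
  have Pne: "{} \<notin> P" using Pp unfolding partition_on_def by auto
  have cardr: "card (restr P \<tau>) = card {B \<in> P. B \<subseteq> \<tau>}" if t: "\<tau> \<in> Q" for \<tau>
  proof -
    have inj: "inj_on (image (std_map \<tau>)) {B \<in> P. B \<subseteq> \<tau>}"
      by (rule inj_on_subset[OF inj_on_image_Pow[OF std_map_inj[OF NCP_block_fin[OF Q t]]]]) auto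
    show ?thesis using restr_sub_alt[OF Pp PQ t] card_image[OF inj] by simp
  qed
  have "prod_mset (image_mset opd_eps_gen (quot P Q)) = (\<Prod>\<tau>\<in>Q. (opd_eps_gen (restr P \<tau>) :: 'k))"
    unfolding quot_def by (simp add: prod_unfold_prod_mset image_mset.compositionality comp_def)
  also have "\<dots> = (if P = Q then 1 else 0)"
  proof (cases "P = Q")
    case True
    have "opd_eps_gen (restr P \<tau>) = (1::'k)" if t: "\<tau> \<in> Q" for \<tau>
    proof -
      have "{B \<in> P. B \<subseteq> \<tau>} = {\<tau>}"
      proof (intro equalityI subsetI)
        fix B assume B: "B \<in> {B \<in> P. B \<subseteq> \<tau>}"
        then have "B \<noteq> {}" using Pne by auto
        then have "B = \<tau>" using block_unique[OF Qp _ t _ subset_refl, of B] B True by auto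
        then show "B \<in> {\<tau>}" by simp
      next
        fix B assume "B \<in> {\<tau>}"
        then show "B \<in> {B \<in> P. B \<subseteq> \<tau>}" using t True by auto
      qed
      then show ?thesis unfolding opd_eps_gen_def using cardr[OF t] by simp
    qed
    then show ?thesis using True by simp
  next
    case False
    have "\<not> Q \<subseteq> P"
    proof
      assume QP: "Q \<subseteq> P"
      have "P \<subseteq> Q"
      proof
        fix B assume B: "B \<in> P"
        obtain \<tau> where t: "\<tau> \<in> Q" "B \<subseteq> \<tau>" using block_in_some[OF Pp Qp PQ B] by auto
        have "B \<noteq> {}" using B Pne by auto
        then have "B = \<tau>" using block_unique[OF Pp B _ _ subset_refl t(2)] t(1) QP by auto
        then show "B \<in> Q" using t by simp
      qed
      then show False using QP False by auto
    qed
    then obtain \<tau> where t: "\<tau> \<in> Q" "\<tau> \<notin> P" by auto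
    have "card {B \<in> P. B \<subseteq> \<tau>} \<noteq> 1"
    proof
      assume "card {B \<in> P. B \<subseteq> \<tau>} = 1"
      then obtain B0 where B0: "{B \<in> P. B \<subseteq> \<tau>} = {B0}" by (rule card_1_singletonE)
      obtain S where S: "S \<subseteq> P" "\<tau> = \<Union>S" using PQ t(1) unfolding refines_def by auto
      have "S \<subseteq> {B \<in> P. B \<subseteq> \<tau>}" using S by auto
      then have "\<tau> \<subseteq> B0" using S B0 by auto
      moreover have "B0 \<subseteq> \<tau>" "B0 \<in> P" using B0 by auto
      ultimately show False using t(2) by auto
    qed
    then have "opd_eps_gen (restr P \<tau>) = (0::'k)" unfolding opd_eps_gen_def using cardr[OF t(1)] by simp
    then have "(\<Prod>\<tau>\<in>Q. (opd_eps_gen (restr P \<tau>) :: 'k)) = 0" using fQ t(1) by (intro prod_zero) auto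
    then show ?thesis using False by simp
  qed
  finally show ?thesis .
qed

theorem mainTheorem6:
  fixes x :: "(ptn \<times> ptn) \<Rightarrow>\<^sub>0 'k::field"
  assumes "Poly_Mapping.keys x \<subseteq> lat_basis"
  shows "opd_delta (Phi x) = Phi_tensor (lat_delta x) \<and> opd_eps (Phi x) = lat_eps x"
proof
  have "opd_delta (Phi x) = lin_ext (\<lambda>a. lin_ext opd_delta_mono ((\<lambda>(P, Q). Poly_Mapping.single (quot P Q) (1::'k)) a)) x"
    unfolding opd_delta_def Phi_def by (rule lin_ext_comp)
  also have "\<dots> = lin_ext (\<lambda>a. Phi_tensor (lat_delta_basis a)) x"
  proof (rule lin_ext_cong)
    fix a assume "a \<in> Poly_Mapping.keys x"
    then obtain P Q n where a: "a = (P, Q)" "P \<in> NCP n" "Q \<in> NCP n" "refines P Q"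
      using assms unfolding lat_basis_def by auto
    show "lin_ext opd_delta_mono ((\<lambda>(P, Q). Poly_Mapping.single (quot P Q) (1::'k)) a) = Phi_tensor (lat_delta_basis a)"
      using basis_delta[OF a(2-4)] a(1) by (simp add: lin_ext_single1)
  qed
  also have "\<dots> = Phi_tensor (lat_delta x)"
    unfolding lat_delta_def Phi_tensor_def by (rule lin_ext_comp[symmetric])
  finally show "opd_delta (Phi x) = Phi_tensor (lat_delta x)" .
next
  have "opd_eps (Phi x) = lin_fun (\<lambda>a. lin_fun (\<lambda>M. prod_mset (image_mset opd_eps_gen M)) ((\<lambda>(P, Q). Poly_Mapping.single (quot P Q) (1::'k)) a)) x"
    unfolding opd_eps_def Phi_def by (rule lin_fun_comp)
  also have "\<dots> = lat_eps x"
    unfolding lat_eps_def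
  proof (rule lin_fun_cong)
    fix a assume "a \<in> Poly_Mapping.keys x"
    then obtain P Q n where a: "a = (P, Q)" "P \<in> NCP n" "Q \<in> NCP n" "refines P Q"
      using assms unfolding lat_basis_def by auto
    show "lin_fun (\<lambda>M. prod_mset (image_mset opd_eps_gen M)) ((\<lambda>(P, Q). Poly_Mapping.single (quot P Q) (1::'k)) a) = (\<lambda>(P, Q). if P = Q then 1 else 0) a"
      using basis_eps[OF a(2-4)] a(1) by (simp add: lin_fun_single1)
  qed
  finally show "opd_eps (Phi x) = lat_eps x" .
qed

end
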